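(* Let $n\ge 4$ be a power of $4$ and let $\mathcal{H}_2$ be as in the context. Then: (a) For all integers $i,j$, $\mathbb{E}_{h\in\mathcal{H}_2}[h_ih_j]=\mathbb{E}_{h\in\mathcal{H}_2}[h_{i+\sqrt n}h_{j+\sqrt n}]$. (b) If $1\le i,i',j,j'\le n$ with $i,i'$ in the same block, $j,j'$ in the same block, $i\ne j$ and $i'\ne j'$, then $\mathbb{E}_{h\in\mathcal{H}_2}[h_ih_j]=\mathbb{E}_{h\in\mathcal{H}_2}[h_{i'}h_{j'}]$. (c) There is an absolute constant $C$ (independent of $n$) such that $\sum_{1\le i,j\le n,\ i\ne j}\left|\mathbb{E}_{h\in\mathcal{H}_2}[h_ih_j]\right|\le Cn$.
   Context: Let $n$ be a power of $4$, $\ell=\sqrt n/2$, and for $1\le c\le \sqrt n$ the $c$-th block is $\{(c-1)\sqrt n+1,\dots,c\sqrt n\}$. The family $\mathcal{H}_1$: a random $h:[n]\to\{-1,1\}$ with independent coordinates, $\mathbb{P}[h_i=1]=\tfrac12+\tfrac{1}{2(\ell+1-c)}$ for $i$ in block $c\le\ell$ and $\mathbb{P}[h_i=1]=\tfrac12-\tfrac{1}{2(c-\ell)}$ for $i$ in block $c\ge\ell+1$. Indices are taken modulo $n$ ($h_{i+n}=h_i$). The family $\mathcal{H}_2$: draw $h$ from $\mathcal{H}_1$ and independently $d$ uniform in $\{0,1,\dots,\sqrt n-1\}$, and output $h'$ with $h'_i=h_{i+d\sqrt n}$ for all $i$ (indices modulo $n$). *)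

theory Defs
  imports "HOL-Probability.Probability"
begin

(* sqrt n as a natural number (exact when n is a power of 4) *)
definition sqn :: "nat \<Rightarrow> nat" where
  "sqn n = nat \<lfloor>sqrt (real n)\<rfloor>"

definition ell :: "nat \<Rightarrow> nat" where
  "ell n = sqn n div 2"

definition blk :: "nat \<Rightarrow> nat \<Rightarrow> nat" where
  "blk n i = (i - 1) div sqn n + 1"

definition p1 :: "nat \<Rightarrow> nat \<Rightarrow> real" where
  "p1 n i = (let c = blk n i in
     if c \<le> ell n then 1/2 + 1 / (2 * (real (ell n) + 1 - real c))
     else 1/2 - 1 / (2 * (real c - real (ell n))))"

definition sign_pmf :: "real \<Rightarrow> real pmf" where
  "sign_pmf p = map_pmf (\<lambda>b. if b then 1 else -1) (bernoulli_pmf p)"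

(* vectors h : [n] -> {-1,1} are functions nat => real, supported on {1..n} (value 0 elsewhere) *)
definition H1 :: "nat \<Rightarrow> (nat \<Rightarrow> real) pmf" where
  "H1 n = Pi_pmf {1..n} 0 (\<lambda>i. sign_pmf (p1 n i))"

(* h_i for an arbitrary integer index i, taken modulo n (h_{i+n} = h_i) *)
definition hv :: "nat \<Rightarrow> (nat \<Rightarrow> real) \<Rightarrow> int \<Rightarrow> real" where
  "hv n h i = h (nat ((i - 1) mod int n) + 1)"

definition H2 :: "nat \<Rightarrow> (nat \<Rightarrow> real) pmf" where
  "H2 n = do {
     d \<leftarrow> pmf_of_set {0..<sqn n};
     h \<leftarrow> H1 n;
     return_pmf (\<lambda>i. if i \<in> {1..n} then hv n h (int i + int (d * sqn n)) else 0)
   }"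

definition corr2 :: "nat \<Rightarrow> int \<Rightarrow> int \<Rightarrow> real" where
  "corr2 n i j = measure_pmf.expectation (H2 n) (\<lambda>h. hv n h i * hv n h j)"

end

theory Submission
  imports Defs
begin



definition Hs :: "nat \<Rightarrow> real" where "Hs L = (\<Sum>k=1..L. 1 / real k)"
definition Mq :: "nat \<Rightarrow> nat \<Rightarrow> real" where
  "Mq l q = (if q < l then 1 / real (l - q) else - 1 / real (q + 1 - l))"
definition gg :: "nat \<Rightarrow> nat \<Rightarrow> real" where
  "gg l t = (\<Sum>p<2*l. Mq l p * Mq l ((p + t) mod (2*l)))"

lemma Hs_0[simp]: "Hs 0 = 0" by (simp add: Hs_def)
lemma Hs_Suc: "Hs (Suc L) = Hs L + 1 / real (Suc L)"
  by (simp add: Hs_def)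
lemma Hs_nonneg: "Hs L \<ge> 0" unfolding Hs_def by (intro sum_nonneg) auto

lemma sum_refl_ivl: "(\<Sum>k\<in>{a..b::nat}. f (a + b - k)) = (\<Sum>k\<in>{a..b}. f k)"
  by (rule sum.reindex_bij_witness[of _ "\<lambda>k. a+b-k" "\<lambda>k. a+b-k"]) auto

lemma sum_split_ivl: "b \<le> c \<Longrightarrow> a \<le> b + 1 \<Longrightarrow>
   (\<Sum>k\<in>{a..c::nat}. f k) = (\<Sum>k\<in>{a..b}. f k) + (\<Sum>k\<in>{Suc b..c}. f k)"
proof -
  assume h: "b \<le> c" "a \<le> b + 1"
  have "{a..c} = {a..b} \<union> {Suc b..c}" using h by auto
  then show ?thesis by (simp add: sum.union_disjoint)
qed

lemma sum_lt2l: "(\<Sum>p<2*(l::nat). F p) = (\<Sum>m\<in>{1..l}. F (l - m)) + (\<Sum>k\<in>{1..l}. F (l + k - 1))"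
proof -
  have "{..<2*l} = {..<l} \<union> {l..<2*l}" by auto
  then have "(\<Sum>p<2*l. F p) = (\<Sum>p<l. F p) + (\<Sum>p\<in>{l..<2*l}. F p)"
    by (metis sum.union_disjoint finite_lessThan finite_atLeastLessThan ivl_disj_int_one(2))
  also have "(\<Sum>p<l. F p) = (\<Sum>m\<in>{1..l}. F (l - m))"
    by (rule sum.reindex_bij_witness[of _ "\<lambda>m. l - m" "\<lambda>p. l - p"]) auto
  also have "(\<Sum>p\<in>{l..<2*l}. F p) = (\<Sum>k\<in>{1..l}. F (l + k - 1))"
    by (rule sum.reindex_bij_witness[of _ "\<lambda>k. l + k - 1" "\<lambda>p. p + 1 - l"]) auto
  finally show ?thesis .
qed

lemma Mq_pos: "1 \<le> m \<Longrightarrow> m \<le> l \<Longrightarrow> Mq l (l - m) = 1 / real m"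
  by (simp add: Mq_def)
lemma Mq_neg: "1 \<le> k \<Longrightarrow> Mq l (l + k - 1) = - 1 / real k"
  by (auto simp: Mq_def of_nat_diff)

lemma pf1: assumes "(a::real) > 0" "b > 0" shows "1/(a*b) = (1/a + 1/b)/(a+b)"
proof -
  have "a \<noteq> 0" "b \<noteq> 0" "a + b \<noteq> 0" using assms by auto
  then show ?thesis by (simp add: divide_simps)
qed
lemma pf2: assumes "(a::real) > 0" "t > 0" shows "1/(a*(a+t)) = (1/a - 1/(a+t))/t"
proof -
  have "a \<noteq> 0" "t \<noteq> 0" "a + t \<noteq> 0" using assms by auto
  then show ?thesis by (simp add: divide_simps)
qed

lemma telesc: "t \<ge> 1 \<Longrightarrow>
  (\<Sum>k=1..L. 1 / (real k * (real k + real t))) = (Hs t + Hs L - Hs (L + t)) / real t"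
proof (induction L)
  case 0 then show ?case by simp
next
  case (Suc L)
  have e: "1 / (real (Suc L) * (real (Suc L) + real t)) = (1 / real (Suc L) - 1 / real (Suc L + t)) / real t"
  proof -
    have "real t > 0" using Suc.prems by simp
    then show ?thesis using pf2[of "real (Suc L)" "real t"] by (simp only: of_nat_add)
  qed
  have "(\<Sum>k=1..Suc L. 1 / (real k * (real k + real t))) =
        (\<Sum>k=1..L. 1 / (real k * (real k + real t))) + 1 / (real (Suc L) * (real (Suc L) + real t))"
    by simp
  also have "\<dots> = (Hs t + Hs L - Hs (L + t)) / real t + (1 / real (Suc L) - 1 / real (Suc L + t)) / real t"
    using Suc by (simp only: e)
  also have "\<dots> = (Hs t + Hs (Suc L) - Hs (Suc L + t)) / real t"
    by (simp add: Hs_Suc diff_divide_distrib add_divide_distrib)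
  finally show ?case .
qed

lemma sumV: "(\<Sum>m=1..t. 1 / (real m * (real t + 1 - real m))) = 2 * Hs t / (real t + 1)"
proof -
  have "(\<Sum>m=1..t. 1 / (real m * (real t + 1 - real m))) =
        (\<Sum>m=1..t. (1 / real m + 1 / real (1 + t - m)) / (real t + 1))"
  proof (intro sum.cong refl)
    fix m assume "m \<in> {1..t}"
    then have a: "real m > 0" "real t + 1 - real m > 0" and b: "real (1 + t - m) = real t + 1 - real m"
      by (auto simp: of_nat_diff)
    show "1 / (real m * (real t + 1 - real m)) = (1 / real m + 1 / real (1 + t - m)) / (real t + 1)"
      unfolding b using a pf1[of "real m" "real t + 1 - real m"] by simp
  qed
  also have "\<dots> = ((\<Sum>m=1..t. 1 / real m) + (\<Sum>m=1..t. 1 / real (1 + t - m))) / (real t + 1)"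
    by (simp only: add_divide_distrib sum_divide_distrib sum.distrib)
  also have "(\<Sum>m=1..t. 1 / real (1 + t - m)) = (\<Sum>m=1..t. 1 / real m)"
    by (rule sum_refl_ivl)
  finally show ?thesis by (simp add: Hs_def)
qed

lemma f1: assumes "1 \<le> m" "m \<le> t" "t \<le> l"
  shows "Mq l ((l - m + t) mod (2*l)) = -1/(real t + 1 - real m)"
proof -
  have a: "(l - m + t) mod (2*l) = l - m + t" using assms by simp
  have b: "\<not> (l - m + t < l)" and c: "l - m + t + 1 - l = t + 1 - m" using assms by auto
  show ?thesis unfolding a Mq_def using b c assms by (simp add: of_nat_diff)
qed

lemma f2: assumes "t < m" "m \<le> l"
  shows "Mq l ((l - m + t) mod (2*l)) = 1/(real m - real t)"
proof -
  have a: "(l - m + t) mod (2*l) = l - m + t" using assms by simp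
  have b: "l - m + t < l" and c: "l - (l - m + t) = m - t" using assms by auto
  show ?thesis unfolding a Mq_def using b c assms by (simp add: of_nat_diff)
qed

lemma f3: assumes "1 \<le> k" "k \<le> l - t" "t \<le> l"
  shows "Mq l ((l + k - 1 + t) mod (2*l)) = -1/(real k + real t)"
proof -
  have a: "(l + k - 1 + t) mod (2*l) = l + k - 1 + t" using assms by simp
  have b: "\<not> (l + k - 1 + t < l)" and c: "l + k - 1 + t + 1 - l = k + t" using assms by auto
  show ?thesis unfolding a Mq_def using b c assms by simp
qed

lemma f4: assumes "l - t < k" "k \<le> l" "t \<le> l" "1 \<le> t"
  shows "Mq l ((l + k - 1 + t) mod (2*l)) = 1/(2 * real l + 1 - real t - real k)"
proof -
  have a: "(l + k - 1 + t) mod (2*l) = k + t - 1 - l"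
  proof -
    have "l + k - 1 + t = (k + t - 1 - l) + 2*l" "k + t - 1 - l < 2 * l" using assms by auto
    then show ?thesis by (metis mod_add_self2 mod_less)
  qed
  have b: "k + t - 1 - l < l" and c: "l - (k + t - 1 - l) = 2*l + 1 - t - k" using assms by auto
  have d: "real (2*l + 1 - t - k) = 2 * real l + 1 - real t - real k" using assms by (simp add: of_nat_diff)
  show ?thesis unfolding a Mq_def using b c d by simp
qed

lemma Hs_split: "t \<le> l \<Longrightarrow> (\<Sum>k=Suc (l-t)..l. 1 / real k) = Hs l - Hs (l - t)"
  unfolding Hs_def using sum_split_ivl[of "l-t" l 1 "\<lambda>k. 1 / real k"] by simp

lemma sumW: assumes "1 \<le> t" "t \<le> l"
  shows "(\<Sum>k=Suc (l-t)..l. 1 / (real k * (2 * real l + 1 - real t - real k)))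
         = 2 * (Hs l - Hs (l - t)) / (2 * real l + 1 - real t)"
proof -
  let ?N = "2 * real l + 1 - real t"
  have "(\<Sum>k=Suc (l-t)..l. 1 / (real k * (2 * real l + 1 - real t - real k)))
        = (\<Sum>k=Suc (l-t)..l. (1 / real k + 1 / real (Suc (l-t) + l - k)) / ?N)"
  proof (intro sum.cong refl)
    fix k assume k: "k \<in> {Suc (l-t)..l}"
    then have a: "real k > 0" "2 * real l + 1 - real t - real k > 0"
      and b: "real (Suc (l-t) + l - k) = 2 * real l + 1 - real t - real k"
      using assms by (auto simp: of_nat_diff)
    show "1 / (real k * (2 * real l + 1 - real t - real k)) = (1 / real k + 1 / real (Suc (l-t) + l - k)) / ?N"
      unfolding b using pf1[OF a] by simp
  qed
  also have "\<dots> = ((\<Sum>k=Suc (l-t)..l. 1 / real k) + (\<Sum>k=Suc (l-t)..l. 1 / real (Suc (l-t) + l - k))) / ?N"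
    by (simp only: add_divide_distrib sum_divide_distrib sum.distrib)
  also have "(\<Sum>k=Suc (l-t)..l. 1 / real (Suc (l-t) + l - k)) = (\<Sum>k=Suc (l-t)..l. 1 / real k)"
    by (rule sum_refl_ivl)
  finally show ?thesis using Hs_split[OF assms(2)] by simp
qed

lemma gg_formula: assumes "1 \<le> t" "t \<le> l"
  shows "gg l t = 2 * Hs t / (real t * (real t + 1)) - 2 * (Hs l - Hs (l - t)) / real t
                  - 2 * (Hs l - Hs (l - t)) / (2 * real l + 1 - real t)"
proof -
  let ?D = "Hs l - Hs (l - t)" and ?N = "2 * real l + 1 - real t"
  have T: "(\<Sum>k=1..l-t. 1 / (real k * (real k + real t))) = (Hs t + Hs (l - t) - Hs l) / real t"
    using telesc[OF assms(1), of "l-t"] assms by simp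
  have "gg l t = (\<Sum>m=1..l. (1 / real m) * Mq l ((l - m + t) mod (2*l)))
               + (\<Sum>k=1..l. (-1 / real k) * Mq l ((l + k - 1 + t) mod (2*l)))"
    unfolding gg_def sum_lt2l
    by (intro arg_cong2[where f="(+)"] sum.cong refl) (auto simp: Mq_pos Mq_neg Mq_def)
  also have "(\<Sum>m=1..l. (1 / real m) * Mq l ((l - m + t) mod (2*l)))
     = (\<Sum>m=1..t. (1 / real m) * Mq l ((l - m + t) mod (2*l)))
       + (\<Sum>m=Suc t..l. (1 / real m) * Mq l ((l - m + t) mod (2*l)))"
    using assms by (intro sum_split_ivl) auto
  also have "(\<Sum>m=1..t. (1 / real m) * Mq l ((l - m + t) mod (2*l)))
      = - (\<Sum>m=1..t. 1 / (real m * (real t + 1 - real m)))"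
    proof (subst sum_negf[symmetric], intro sum.cong refl)
      fix m assume h: "m \<in> {1..t}"
      have "Mq l ((l - m + t) mod (2*l)) = -1/(real t + 1 - real m)"
        using assms h by (intro f1) auto
      then show "(1 / real m) * Mq l ((l - m + t) mod (2*l)) = - (1 / (real m * (real t + 1 - real m)))" by simp
  qed
  also have "(\<Sum>m=Suc t..l. (1 / real m) * Mq l ((l - m + t) mod (2*l)))
      = (\<Sum>m=Suc t..l. 1 / (real m * (real m - real t)))"
    proof (intro sum.cong refl)
      fix m assume h: "m \<in> {Suc t..l}"
      have "Mq l ((l - m + t) mod (2*l)) = 1/(real m - real t)"
        using assms h by (intro f2) auto
      then show "(1 / real m) * Mq l ((l - m + t) mod (2*l)) = 1 / (real m * (real m - real t))" by simp
  qed
  also have "\<dots> = (\<Sum>k=1..l-t. 1 / (real k * (real k + real t)))"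
  proof -
    have "{Suc t..l} = {1 + t..(l - t) + t}" using assms by auto
    then have "(\<Sum>m=Suc t..l. 1 / (real m * (real m - real t)))
       = (\<Sum>k=1..l-t. 1 / (real (k + t) * (real (k + t) - real t)))"
      by (simp only: sum.shift_bounds_cl_nat_ivl)
    also have "\<dots> = (\<Sum>k=1..l-t. 1 / (real k * (real k + real t)))"
      by (intro sum.cong refl) (simp add: algebra_simps)
    finally show ?thesis .
  qed
  also have "(\<Sum>k=1..l. (-1 / real k) * Mq l ((l + k - 1 + t) mod (2*l)))
     = (\<Sum>k=1..l-t. (-1 / real k) * Mq l ((l + k - 1 + t) mod (2*l)))
       + (\<Sum>k=Suc (l-t)..l. (-1 / real k) * Mq l ((l + k - 1 + t) mod (2*l)))"
    using assms by (intro sum_split_ivl) auto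
  also have "(\<Sum>k=1..l-t. (-1 / real k) * Mq l ((l + k - 1 + t) mod (2*l)))
      = (\<Sum>k=1..l-t. 1 / (real k * (real k + real t)))"
    proof (intro sum.cong refl)
      fix k assume h: "k \<in> {1..l-t}"
      have "Mq l ((l + k - 1 + t) mod (2*l)) = -1/(real k + real t)"
        using assms h by (intro f3) auto
      then show "(-1 / real k) * Mq l ((l + k - 1 + t) mod (2*l)) = 1 / (real k * (real k + real t))" by simp
  qed
  also have "(\<Sum>k=Suc (l-t)..l. (-1 / real k) * Mq l ((l + k - 1 + t) mod (2*l)))
      = - (\<Sum>k=Suc (l-t)..l. 1 / (real k * (2 * real l + 1 - real t - real k)))"
    proof (subst sum_negf[symmetric], intro sum.cong refl)
      fix k assume h: "k \<in> {Suc (l-t)..l}"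
      have "Mq l ((l + k - 1 + t) mod (2*l)) = 1/(2 * real l + 1 - real t - real k)"
        using assms h by (intro f4) auto
      then show "(-1 / real k) * Mq l ((l + k - 1 + t) mod (2*l)) = - (1 / (real k * (2 * real l + 1 - real t - real k)))" by simp
  qed
  finally have "gg l t = - (2 * Hs t / (real t + 1)) + (Hs t + Hs (l - t) - Hs l) / real t
     + ((Hs t + Hs (l - t) - Hs l) / real t - 2 * ?D / ?N)"
    unfolding sumV sumW[OF assms] T by simp
  moreover have "real t > 0" using assms by simp
  then have e1: "2 * Hs t / (real t * (real t + 1)) = 2 * Hs t / real t - 2 * Hs t / (real t + 1)"
    by (simp add: divide_simps) (simp add: algebra_simps)
  have e2: "(Hs t + Hs (l - t) - Hs l) / real t = Hs t / real t - ?D / real t"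
    by (simp add: diff_divide_distrib add_divide_distrib)
  have e3: "2 * ?D / real t = 2 * (?D / real t)" "2 * Hs t / real t = 2 * (Hs t / real t)" by simp_all
  ultimately show ?thesis unfolding e1 e3 by (simp only: e2)
qed

lemma mod_cancel_aux: "(a + b) mod c = (a + d) mod c \<Longrightarrow> b mod c = (d::nat) mod c"
  by (simp add: nat_mod_eq_iff)

lemma sum_mod_shift: assumes "(s::nat) > 0"
  shows "(\<Sum>d<s. f ((a + d) mod s)) = (\<Sum>d<s. f d)"
proof -
  have inj: "inj_on (\<lambda>d. (a + d) mod s) {..<s}"
  proof (rule inj_onI)
    fix x y assume "x \<in> {..<s}" "y \<in> {..<s}" "(a + x) mod s = (a + y) mod s"
    then have "x mod s = y mod s" using mod_cancel_aux by blast
    then show "x = y" using \<open>x \<in> {..<s}\<close> \<open>y \<in> {..<s}\<close> by simp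
  qed
  have img: "(\<lambda>d. (a + d) mod s) ` {..<s} = {..<s}"
    using assms inj by (intro endo_inj_surj) auto
  have "(\<Sum>d<s. f d) = (\<Sum>d\<in>(\<lambda>d. (a + d) mod s) ` {..<s}. f d)" using img by simp
  also have "\<dots> = (\<Sum>d<s. f ((a + d) mod s))" using inj by (simp add: sum.reindex)
  finally show ?thesis by simp
qed

lemma sum_inv_sq: "(\<Sum>t=1..L. 1 / (real t)^2) \<le> 2 - 2 / (real L + 1)"
proof (induction L)
  case 0 then show ?case by simp
next
  case (Suc L)
  have h: "1 / (real (Suc L))^2 \<le> 2 / real (Suc L) - 2 / (real (Suc L) + 1)"
    by (simp add: divide_simps power2_eq_square)
  have e: "real L + 1 = real (Suc L)" by simp
  have IH: "(\<Sum>t=1..L. 1 / (real t)^2) \<le> 2 - 2 / real (Suc L)" using Suc.IH unfolding e .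
  have "(\<Sum>t=1..Suc L. 1 / (real t)^2) = (\<Sum>t=1..L. 1 / (real t)^2) + 1 / (real (Suc L))^2"
    by (simp only: sum.cl_ivl_Suc) simp
  then show ?case using h IH by linarith
qed

lemma Hs_tel: "(\<Sum>t=1..L. Hs t / (real t * (real t + 1))) + Hs L / (real L + 1) = (\<Sum>t=1..L. 1 / (real t)^2)"
proof (induction L)
  case 0 then show ?case by simp
next
  case (Suc L)
  have "Hs (Suc L) / (real (Suc L) * (real (Suc L) + 1)) + Hs (Suc L) / (real (Suc L) + 1) - Hs L / (real L + 1)
        = 1 / (real (Suc L))^2"
    by (simp add: Hs_Suc divide_simps power2_eq_square) (simp add: algebra_simps)
  then show ?case using Suc by simp
qed

lemma sum_Hs_le: "(\<Sum>t=1..L. Hs t / (real t * (real t + 1))) \<le> 2"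
proof -
  have "Hs L / (real L + 1) \<ge> 0" using Hs_nonneg by simp
  moreover have "2 - 2 / (real L + 1) \<le> 2" by simp
  ultimately show ?thesis using Hs_tel[of L] sum_inv_sq[of L] by linarith
qed

lemma sum_D_aux: "(\<Sum>j<L. Hs L - Hs j) = real L"
proof (induction L)
  case 0 then show ?case by simp
next
  case (Suc L)
  have "(\<Sum>j<Suc L. Hs (Suc L) - Hs j) = (\<Sum>j<Suc L. (Hs L - Hs j) + 1 / real (Suc L))"
    by (simp add: Hs_Suc algebra_simps)
  also have "\<dots> = (\<Sum>j<Suc L. Hs L - Hs j) + 1"
    by (simp add: sum.distrib)
  finally show ?case using Suc by simp
qed

lemma sum_D: "(\<Sum>t=1..l. Hs l - Hs (l - t)) = real l"
proof -
  have "(\<Sum>t=1..l. Hs l - Hs (l - t)) = (\<Sum>j<l. Hs l - Hs j)"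
    by (rule sum.reindex_bij_witness[of _ "\<lambda>j. l - j" "\<lambda>t. l - t"]) auto
  then show ?thesis using sum_D_aux by simp
qed

lemma D_nonneg: "t \<le> l \<Longrightarrow> Hs l - Hs (l - t) \<ge> 0"
  using Hs_split[of t l] by (metis sum_nonneg of_nat_0_le_iff divide_nonneg_nonneg zero_le_one)

lemma D_le: assumes "t \<le> l" shows "Hs l - Hs (l - t) \<le> real t / (real l - real t + 1)"
proof -
  have "(\<Sum>k=Suc (l-t)..l. 1 / real k) \<le> real (card {Suc (l-t)..l}) * (1 / (real l - real t + 1))"
  proof (rule sum_bounded_above)
    fix k assume "k \<in> {Suc (l-t)..l}"
    then have "real k \<ge> real l - real t + 1" "real l - real t + 1 > 0" using assms by (auto simp: of_nat_diff)
    then show "1 / real k \<le> 1 / (real l - real t + 1)" by (simp add: frac_le)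
  qed
  moreover have "card {Suc (l-t)..l} = t" using assms by simp
  ultimately show ?thesis using Hs_split[OF assms] by simp
qed

lemma Dt_bound: assumes "1 \<le> t" "t \<le> l"
  shows "(Hs l - Hs (l - t)) / real t \<le> 2 / real l + 2 * (Hs l - Hs (l - t)) / real l"
proof (cases "2 * t \<le> l")
  case True
  have D0: "Hs l - Hs (l - t) \<ge> 0" using D_nonneg assms by simp
  have "(Hs l - Hs (l - t)) / real t \<le> (real t / (real l - real t + 1)) / real t"
    by (intro divide_right_mono D_le[OF assms(2)]) simp
  also have "\<dots> = 1 / (real l - real t + 1)" using assms by simp
  also have "\<dots> \<le> 2 / real l"
  proof -
    have "real (2 * t) \<le> real l" using True by (simp only: of_nat_le_iff)
    then have "real l - real t + 1 > 0" "real l > 0" "2 * (real l - real t + 1) \<ge> real l" using assms by simp_all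
    then show ?thesis by (simp add: divide_simps)
  qed
  finally show ?thesis using D0 assms by (simp add: add_increasing2)
next
  case False
  have D0: "Hs l - Hs (l - t) \<ge> 0" using D_nonneg assms by simp
  have "1 / real t \<le> 2 / real l"
  proof -
    have "real t > 0" "real l > 0" "2 * real t \<ge> real l" using False assms by linarith+
    then show ?thesis by (simp add: divide_simps)
  qed
  then have "(Hs l - Hs (l - t)) * (1 / real t) \<le> (Hs l - Hs (l - t)) * (2 / real l)"
    using D0 by (intro mult_left_mono) auto
  moreover have "(Hs l - Hs (l - t)) * (1 / real t) = (Hs l - Hs (l - t)) / real t"
    "(Hs l - Hs (l - t)) * (2 / real l) = 2 * (Hs l - Hs (l - t)) / real l" by simp_all
  moreover have "2 / real l \<ge> 0" by simp
  ultimately show ?thesis by linarith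
qed

lemma gg_abs_bound: assumes "1 \<le> t" "t \<le> l"
  shows "\<bar>gg l t\<bar> \<le> 2 * (Hs t / (real t * (real t + 1))) + 4 / real l + 6 * ((Hs l - Hs (l - t)) / real l)"
proof -
  let ?D = "Hs l - Hs (l - t)" and ?N = "2 * real l + 1 - real t"
  have D0: "?D \<ge> 0" using D_nonneg assms by simp
  have A0: "Hs t / (real t * (real t + 1)) \<ge> 0" using Hs_nonneg by simp
  have Npos: "?N \<ge> real l" "real l > 0" using assms by simp_all
  have B: "2 * ?D / real t \<le> 4 / real l + 4 * (?D / real l)"
  proof -
    have "2 * ?D / real t = 2 * (?D / real t)" "2 * ?D / real l = 2 * (?D / real l)"
      by (rule times_divide_eq_right[symmetric])+
    then show ?thesis using Dt_bound[OF assms] by linarith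
  qed
  have B0: "2 * ?D / real t \<ge> 0" using D0 by simp
  have C: "2 * ?D / ?N \<le> 2 * ?D / real l"
    using D0 Npos by (intro divide_left_mono) auto
  have C0: "2 * ?D / ?N \<ge> 0" using D0 Npos by simp
  have e: "2 * ?D / real l = 2 * (?D / real l)" "2 * Hs t / (real t * (real t + 1)) = 2 * (Hs t / (real t * (real t + 1)))" by simp_all
  show ?thesis unfolding gg_formula[OF assms] using A0 B B0 C C0 e by linarith
qed

lemma sum_gg_half: assumes "l \<ge> 1" shows "(\<Sum>t=1..l. \<bar>gg l t\<bar>) \<le> 14"
proof -
  have "(\<Sum>t=1..l. \<bar>gg l t\<bar>) \<le> (\<Sum>t=1..l. 2 * (Hs t / (real t * (real t + 1))) + 4 / real l + 6 * ((Hs l - Hs (l - t)) / real l))"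
    by (intro sum_mono gg_abs_bound) auto
  also have "\<dots> = 2 * (\<Sum>t=1..l. Hs t / (real t * (real t + 1))) + real l * (4 / real l) + 6 * ((\<Sum>t=1..l. Hs l - Hs (l - t)) / real l)"
    by (simp add: sum.distrib sum_distrib_left sum_divide_distrib)
  also have "\<dots> \<le> 2 * 2 + 4 + 6"
    using sum_Hs_le[of l] assms unfolding sum_D by simp
  finally show ?thesis by simp
qed

lemma gg0: "\<bar>gg l 0\<bar> \<le> 4"
proof -
  have "gg l 0 = (\<Sum>p<2*l. Mq l p * Mq l p)" unfolding gg_def by (intro sum.cong refl) simp
  also have "\<dots> = (\<Sum>m=1..l. Mq l (l - m) * Mq l (l - m)) + (\<Sum>k=1..l. Mq l (l + k - 1) * Mq l (l + k - 1))"
    by (rule sum_lt2l)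
  also have "\<dots> = (\<Sum>m=1..l. 1 / (real m)^2) + (\<Sum>k=1..l. 1 / (real k)^2)"
    by (intro arg_cong2[where f="(+)"] sum.cong refl) (auto simp: Mq_pos Mq_neg Mq_def power2_eq_square)
  finally have "gg l 0 = (\<Sum>m=1..l. 1 / (real m)^2) + (\<Sum>k=1..l. 1 / (real k)^2)" .
  moreover have "(\<Sum>m=1..l. 1 / (real m)^2) \<le> 2" using sum_inv_sq[of l]
    by (smt (verit) divide_nonneg_nonneg of_nat_0_le_iff)
  moreover have "(\<Sum>m=1..l. 1 / (real m)^2) \<ge> 0" by (intro sum_nonneg) simp
  ultimately show ?thesis by simp
qed

lemma gg_sym: assumes "0 < t" "t < 2*l" shows "gg l (2*l - t) = gg l t"
proof -
  have s0: "2*l > 0" using assms by simp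
  have "gg l (2*l - t) = (\<Sum>d<2*l. (\<lambda>p. Mq l p * Mq l ((p + (2*l - t)) mod (2*l))) ((t + d) mod (2*l)))"
    unfolding gg_def by (rule sum_mod_shift[OF s0, symmetric])
  also have "\<dots> = (\<Sum>d<2*l. Mq l d * Mq l ((d + t) mod (2*l)))"
  proof (intro sum.cong refl)
    fix d assume d: "d \<in> {..<2*l}"
    have "((t + d) mod (2*l) + (2*l - t)) mod (2*l) = (t + d + (2*l - t)) mod (2*l)"
      by (simp add: mod_add_left_eq)
    also have "t + d + (2*l - t) = d + 2*l" using assms by simp
    also have "(d + 2*l) mod (2*l) = d" using d by simp
    finally show "(\<lambda>p. Mq l p * Mq l ((p + (2*l - t)) mod (2*l))) ((t + d) mod (2*l)) = Mq l d * Mq l ((d + t) mod (2*l))"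
      by (simp add: add.commute)
  qed
  finally show ?thesis unfolding gg_def .
qed

lemma sum_gg: assumes "l \<ge> 1" shows "(\<Sum>t<2*l. \<bar>gg l t\<bar>) \<le> 32"
proof -
  have U: "{..<2*l} = {0} \<union> ({1..l} \<union> {Suc l..<2*l})" using assms by auto
  have "(\<Sum>t<2*l. \<bar>gg l t\<bar>) = \<bar>gg l 0\<bar> + ((\<Sum>t=1..l. \<bar>gg l t\<bar>) + (\<Sum>t\<in>{Suc l..<2*l}. \<bar>gg l t\<bar>))"
    unfolding U by (subst sum.union_disjoint, auto, subst sum.union_disjoint, auto)
  moreover have "(\<Sum>t\<in>{Suc l..<2*l}. \<bar>gg l t\<bar>) \<le> (\<Sum>t=1..l. \<bar>gg l t\<bar>)"
  proof -
    have inj: "inj_on (\<lambda>t. 2*l - t) {Suc l..<2*l}" by (rule inj_onI) auto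
    have "(\<Sum>t\<in>{Suc l..<2*l}. \<bar>gg l t\<bar>) = (\<Sum>t\<in>{Suc l..<2*l}. \<bar>gg l (2*l - t)\<bar>)"
      by (intro sum.cong refl) (simp add: gg_sym)
    also have "\<dots> = (\<Sum>u\<in>(\<lambda>t. 2*l - t) ` {Suc l..<2*l}. \<bar>gg l u\<bar>)"
      using inj by (simp add: sum.reindex)
    also have "\<dots> \<le> (\<Sum>t=1..l. \<bar>gg l t\<bar>)"
      by (intro sum_mono2) auto
    finally show ?thesis .
  qed
  ultimately show ?thesis using gg0[of l] sum_gg_half[OF assms] by linarith
qed




lemma sign_exp: assumes "0 \<le> p" "p \<le> 1"
  shows "measure_pmf.expectation (sign_pmf p) f = f 1 * p + f (-1) * (1 - p)"
  unfolding sign_pmf_def using assms by simp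

lemma sign_finite: "finite (set_pmf (sign_pmf p))"
  unfolding sign_pmf_def by simp

lemma p1_range: "0 \<le> p1 n a \<and> p1 n a \<le> 1"
proof -
  have c: "blk n a \<ge> 1" unfolding blk_def by simp
  show ?thesis
  proof (cases "blk n a \<le> ell n")
    case True
    define y where "y = real (ell n) + 1 - real (blk n a)"
    have x: "y \<ge> 1" unfolding y_def using True by linarith
    then have "1 / (2 * y) \<le> 1/2" by (simp add: divide_simps)
    moreover have "1 / (2 * y) \<ge> 0" using x by simp
    moreover have "p1 n a = 1/2 + 1 / (2 * y)" unfolding p1_def Let_def y_def using True by simp
    ultimately show ?thesis by linarith
  next
    case False
    define y where "y = real (blk n a) - real (ell n)"
    have x: "y \<ge> 1" unfolding y_def using False by linarith
    then have "1 / (2 * y) \<le> 1/2" by (simp add: divide_simps)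
    moreover have "1 / (2 * y) \<ge> 0" using x by simp
    moreover have "p1 n a = 1/2 - 1 / (2 * y)" unfolding p1_def Let_def y_def using False by simp
    ultimately show ?thesis by linarith
  qed
qed

lemma H1_finite: "finite (set_pmf (H1 n))"
  unfolding H1_def by (subst set_Pi_pmf) (auto intro!: finite_PiE_dflt simp: sign_finite)

lemma H1_comp: "a \<in> {1..n} \<Longrightarrow> map_pmf (\<lambda>f. f a) (H1 n) = sign_pmf (p1 n a)"
  unfolding H1_def by (subst Pi_pmf_component) auto

lemma H1_pair: assumes "a \<in> {1..n}" "b \<in> {1..n}" "a \<noteq> b"
  shows "map_pmf (\<lambda>f. (f a, f b)) (H1 n) = pair_pmf (sign_pmf (p1 n a)) (sign_pmf (p1 n b))"
proof -
  let ?p = "\<lambda>i. sign_pmf (p1 n i)"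
  have A: "{1..n} = insert a ({1..n} - {a})" using assms by auto
  have "map_pmf (\<lambda>f. (f a, f b)) (H1 n)
      = map_pmf (\<lambda>f. (f a, f b)) (map_pmf (\<lambda>(y,f). f(a:=y)) (pair_pmf (?p a) (Pi_pmf ({1..n} - {a}) 0 ?p)))"
    unfolding H1_def by (subst A, subst Pi_pmf_insert) auto
  also have "\<dots> = map_pmf (\<lambda>(y, f). (id y, f b)) (pair_pmf (?p a) (Pi_pmf ({1..n} - {a}) 0 ?p))"
    unfolding pmf.map_comp using assms by (intro pmf.map_cong refl) auto
  also have "\<dots> = pair_pmf (map_pmf id (?p a)) (map_pmf (\<lambda>f. f b) (Pi_pmf ({1..n} - {a}) 0 ?p))"
    by (rule map_pair)
  also have "map_pmf (\<lambda>f. f b) (Pi_pmf ({1..n} - {a}) 0 ?p) = ?p b"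
    using assms by (subst Pi_pmf_component) auto
  finally show ?thesis by simp
qed

lemma pair_exp: assumes "finite (set_pmf P)" "finite (set_pmf Q)"
  shows "measure_pmf.expectation (pair_pmf P Q) (\<lambda>z. fst z * snd z :: real)
       = measure_pmf.expectation P (\<lambda>x. x) * measure_pmf.expectation Q (\<lambda>x. x)"
proof -
  have "measure_pmf.expectation (pair_pmf P Q) (\<lambda>z. fst z * snd z :: real)
     = (\<Sum>z\<in>set_pmf P \<times> set_pmf Q. (fst z * snd z) * pmf (pair_pmf P Q) z)"
    using assms by (intro integral_measure_pmf_real) auto
  also have "\<dots> = (\<Sum>(x,y)\<in>set_pmf P \<times> set_pmf Q. (x * pmf P x) * (y * pmf Q y))"
    by (intro sum.cong refl) (clarsimp simp: pmf_pair)
  also have "\<dots> = (\<Sum>x\<in>set_pmf P. \<Sum>y\<in>set_pmf Q. (x * pmf P x) * (y * pmf Q y))"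
    by (rule sum.cartesian_product[symmetric])
  also have "\<dots> = (\<Sum>x\<in>set_pmf P. x * pmf P x) * (\<Sum>y\<in>set_pmf Q. y * pmf Q y)"
    by (simp add: sum_product)
  also have "(\<Sum>x\<in>set_pmf P. x * pmf P x) = measure_pmf.expectation P (\<lambda>x. x)"
    using assms by (intro integral_measure_pmf_real[symmetric]) auto
  also have "(\<Sum>y\<in>set_pmf Q. y * pmf Q y) = measure_pmf.expectation Q (\<lambda>x. x)"
    using assms by (intro integral_measure_pmf_real[symmetric]) auto
  finally show ?thesis .
qed

definition mu :: "nat \<Rightarrow> nat \<Rightarrow> real" where "mu n a = 2 * p1 n a - 1"

lemma H1_corr: assumes "a \<in> {1..n}" "b \<in> {1..n}"
  shows "measure_pmf.expectation (H1 n) (\<lambda>h. h a * h b) = (if a = b then 1 else mu n a * mu n b)"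
proof (cases "a = b")
  case True
  have "measure_pmf.expectation (H1 n) (\<lambda>h. h a * h b)
      = measure_pmf.expectation (map_pmf (\<lambda>f. f a) (H1 n)) (\<lambda>x. x * x)"
    using True by simp
  also have "\<dots> = 1" unfolding H1_comp[OF assms(1)] using p1_range[of n a] by (simp add: sign_exp)
  finally show ?thesis using True by simp
next
  case False
  have "measure_pmf.expectation (H1 n) (\<lambda>h. h a * h b)
      = measure_pmf.expectation (map_pmf (\<lambda>f. (f a, f b)) (H1 n)) (\<lambda>z. fst z * snd z)"
    by simp
  also have "\<dots> = measure_pmf.expectation (sign_pmf (p1 n a)) (\<lambda>x. x) * measure_pmf.expectation (sign_pmf (p1 n b)) (\<lambda>x. x)"
    unfolding H1_pair[OF assms False] by (intro pair_exp sign_finite)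
  also have "\<dots> = mu n a * mu n b"
    using p1_range[of n a] p1_range[of n b] by (simp add: sign_exp mu_def algebra_simps)
  finally show ?thesis using False by simp
qed

definition pos :: "nat \<Rightarrow> int \<Rightarrow> nat" where "pos n x = nat ((x - 1) mod int n) + 1"

lemma hv_pos: "hv n h x = h (pos n x)" unfolding hv_def pos_def ..

lemma pos_range: assumes "n > 0" shows "pos n x \<in> {1..n}"
proof -
  have "(x - 1) mod int n < int n" "0 \<le> (x - 1) mod int n" using assms by simp_all
  then have "nat ((x - 1) mod int n) < n" by (simp add: nat_less_iff)
  then show ?thesis unfolding pos_def by simp
qed

lemma hv_G: assumes "n > 0"
  shows "hv n (\<lambda>i. if i \<in> {1..n} then hv n h (int i + c) else 0) x = hv n h (x + c)"
proof -
  have r: "pos n x \<in> {1..n}" using pos_range assms .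
  have e: "int (pos n x) = (x - 1) mod int n + 1" unfolding pos_def using assms by simp
  have "(int (pos n x) + c - 1) mod int n = (x + c - 1) mod int n"
  proof -
    have "(int (pos n x) + c - 1) mod int n = (c + (x - 1) mod int n) mod int n"
      unfolding e by (simp add: algebra_simps)
    also have "\<dots> = (c + (x - 1)) mod int n" by (rule mod_add_right_eq)
    finally show ?thesis by (simp add: algebra_simps)
  qed
  then show ?thesis using r unfolding hv_pos by (simp add: pos_def)
qed

lemma corr2_eq: assumes "n > 0" "sqn n > 0"
  shows "corr2 n i j = (\<Sum>d<sqn n. measure_pmf.expectation (H1 n)
            (\<lambda>h. h (pos n (i + int (d * sqn n))) * h (pos n (j + int (d * sqn n))))) / real (sqn n)"
proof -
  let ?G = "\<lambda>d h. (\<lambda>i. if i \<in> {1..n} then hv n h (int i + int (d * sqn n)) else 0)"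
  have fin: "finite (set_pmf (H1 n \<bind> (\<lambda>h. return_pmf (?G d h))))" for d
    using H1_finite by simp
  have "corr2 n i j = (\<Sum>d\<in>{0..<sqn n}. measure_pmf.expectation (H1 n \<bind> (\<lambda>h. return_pmf (?G d h)))
             (\<lambda>h. hv n h i * hv n h j) /\<^sub>R real (card {0..<sqn n}))"
    unfolding corr2_def H2_def using assms fin by (subst pmf_expectation_bind_pmf_of_set) auto
  also have "\<dots> = (\<Sum>d<sqn n. measure_pmf.expectation (H1 n)
            (\<lambda>h. h (pos n (i + int (d * sqn n))) * h (pos n (j + int (d * sqn n)))) / real (sqn n))"
  proof (intro sum.cong)
    fix d
    have "measure_pmf.expectation (H1 n \<bind> (\<lambda>h. return_pmf (?G d h))) (\<lambda>h. hv n h i * hv n h j)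
        = measure_pmf.expectation (map_pmf (?G d) (H1 n)) (\<lambda>h. hv n h i * hv n h j)"
      by (simp add: map_pmf_def)
    also have "\<dots> = measure_pmf.expectation (H1 n) (\<lambda>h. hv n (?G d h) i * hv n (?G d h) j)"
      by simp
    also have "\<dots> = measure_pmf.expectation (H1 n) (\<lambda>h. h (pos n (i + int (d * sqn n))) * h (pos n (j + int (d * sqn n))))"
      by (simp only: hv_G[OF assms(1)]) (simp only: hv_pos)
    finally show "measure_pmf.expectation (H1 n \<bind> (\<lambda>h. return_pmf (?G d h))) (\<lambda>h. hv n h i * hv n h j) /\<^sub>R real (card {0..<sqn n})
       = measure_pmf.expectation (H1 n) (\<lambda>h. h (pos n (i + int (d * sqn n))) * h (pos n (j + int (d * sqn n)))) / real (sqn n)"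
      by (simp add: divide_inverse_commute)
  qed (auto)
  finally show ?thesis by (simp add: sum_divide_distrib)
qed




definition Fm :: "nat \<Rightarrow> nat \<Rightarrow> nat \<Rightarrow> real" where
  "Fm n a b = (if a = b then 1 else mu n a * mu n b)"

lemma corr2_Fm: assumes "n > 0" "sqn n > 0"
  shows "corr2 n i j = (\<Sum>d<sqn n. Fm n (pos n (i + int (d * sqn n))) (pos n (j + int (d * sqn n)))) / real (sqn n)"
proof -
  have e: "measure_pmf.expectation (H1 n) (\<lambda>h. h a * h b) = Fm n a b" if "a \<in> {1..n}" "b \<in> {1..n}" for a b
    using H1_corr[OF that] by (simp add: Fm_def)
  have p: "pos n x \<in> {1..n} = True" for x using pos_range[OF assms(1)] by simp
  show ?thesis unfolding corr2_eq[OF assms] by (simp only: e p)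
qed

lemma params4: assumes "n = 4 ^ k" "n \<ge> 4"
  shows "sqn n = 2 * ell n \<and> sqn n * sqn n = n \<and> ell n \<ge> 1"
proof -
  have k: "k \<ge> 1" using assms by (cases k) auto
  have n2: "n = 2 ^ k * 2 ^ k"
  proof -
    have "(4::nat) ^ k = (2 * 2) ^ k" by simp
    then show ?thesis unfolding assms(1) by (simp only: power_mult_distrib)
  qed
  have "real n = real (2 ^ k) * real (2 ^ k)" unfolding n2 by simp
  then have "sqrt (real n) = real (2 ^ k)" by (simp only: real_sqrt_mult_self) simp
  then have s: "sqn n = 2 ^ k" unfolding sqn_def by simp
  have "ell n = 2 ^ (k - 1)" unfolding ell_def s using k by (cases k) auto
  moreover have "(2::nat) ^ k = 2 * 2 ^ (k - 1)" using k by (cases k) auto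
  ultimately show ?thesis using s n2 by simp
qed

lemma pos_shift: shows "pos n (x + int n) = pos n x"
proof -
  have "x + int n - 1 = (x - 1) + int n" by simp
  then show ?thesis unfolding pos_def by (simp only: mod_add_self2)
qed

lemma part_a: assumes "sqn n = s" "s * s = n" "s > 0"
  shows "corr2 n i j = corr2 n (i + int (sqn n)) (j + int (sqn n))"
proof -
  have n0: "n > 0" using assms by (metis nat_0_less_mult_iff)
  have s0: "sqn n > 0" using assms by simp
  define \<phi> where "\<phi> d = Fm n (pos n (i + int (d * s))) (pos n (j + int (d * s)))" for d
  have "(\<Sum>d<s. Fm n (pos n (i + int s + int (d * s))) (pos n (j + int s + int (d * s))))
       = (\<Sum>d<s. \<phi> (Suc d))"
    unfolding \<phi>_def by (intro sum.cong refl) (simp add: algebra_simps)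
  also have "\<dots> = (\<Sum>d<s. \<phi> d)"
  proof -
    have "\<phi> s = \<phi> 0" unfolding \<phi>_def using pos_shift assms(2)
      by (metis add_0_right int_ops(1) mult_zero_left)
    moreover have "(\<Sum>d<Suc s. \<phi> d) = \<phi> 0 + (\<Sum>d<s. \<phi> (Suc d))" by (rule sum.lessThan_Suc_shift)
    moreover have "(\<Sum>d<Suc s. \<phi> d) = (\<Sum>d<s. \<phi> d) + \<phi> s" by simp
    ultimately show ?thesis by simp
  qed
  finally show ?thesis unfolding corr2_Fm[OF n0 s0] \<phi>_def assms(1) by simp
qed

lemma pos_nat: assumes "i \<ge> 1" shows "pos n (int i + int m) = (i - 1 + m) mod n + 1"
proof -
  have e: "int i + int m - 1 = int (i - 1 + m)" using assms by simp
  have "(int i + int m - 1) mod int n = int ((i - 1 + m) mod n)" unfolding e by (rule of_nat_mod[symmetric])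
  then show ?thesis unfolding pos_def by simp
qed

lemma blk_pos: assumes "sqn n = s" "s * s = n" "s > 0"
  shows "blk n ((x + d * s) mod n + 1) = (x div s + d) mod s + 1"
proof -
  let ?y = "x + d * s"
  have "?y mod n = s * (?y div s mod s) + ?y mod s"
    unfolding assms(2)[symmetric] by (rule mod_mult2_eq)
  moreover have "?y div s = x div s + d" using assms(3) by simp
  moreover have "?y mod s < s" using assms(3) by simp
  ultimately have "?y mod n div s = (x div s + d) mod s" using assms(3) by simp
  then show ?thesis unfolding blk_def assms(1) by simp
qed

lemma mu_Mq: assumes "ell n = l"
  shows "mu n a = Mq l (blk n a - 1)"
proof -
  define c where "c = blk n a"
  have c: "c \<ge> 1" unfolding c_def blk_def by simp
  show ?thesis
  proof (cases "c \<le> l")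
    case True
    define x where "x = real l + 1 - real c"
    have x0: "x > 0" unfolding x_def using True by linarith
    have "mu n a = 2 * (1/2 + 1 / (2 * x)) - 1"
      unfolding mu_def p1_def Let_def assms c_def[symmetric] x_def using True by simp
    also have "\<dots> = 1 / x" using x0 by (simp add: divide_simps)
    also have "x = real (l - (c - 1))" unfolding x_def using True c by (simp add: of_nat_diff)
    also have "1 / real (l - (c - 1)) = Mq l (c - 1)" unfolding Mq_def using True c by simp
    finally show ?thesis unfolding c_def .
  next
    case False
    define x where "x = real c - real l"
    have x0: "x > 0" unfolding x_def using False by linarith
    have "mu n a = 2 * (1/2 - 1 / (2 * x)) - 1"
      unfolding mu_def p1_def Let_def assms c_def[symmetric] x_def using False by simp
    also have "\<dots> = - 1 / x" using x0 by (simp add: divide_simps)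
    also have "x = real (c - 1 + 1 - l)" unfolding x_def using False c by (simp add: of_nat_diff)
    also have "- 1 / real (c - 1 + 1 - l) = Mq l (c - 1)"
    proof -
      have "\<not> (c - 1 < l)" using False by linarith
      then show ?thesis unfolding Mq_def by simp
    qed
    finally show ?thesis unfolding c_def .
  qed
qed




lemma corr_block: assumes "sqn n = s" "s * s = n" "s > 0" "ell n = l"
    "i \<in> {1..n}" "j \<in> {1..n}" "i \<noteq> j"
  shows "corr2 n (int i) (int j) = (\<Sum>d<s. Mq l (((i-1) div s + d) mod s) * Mq l (((j-1) div s + d) mod s)) / real s"
proof -
  have n0: "n > 0" using assms by (metis nat_0_less_mult_iff)
  have s0: "sqn n > 0" using assms by simp
  have "corr2 n (int i) (int j) = (\<Sum>d<s. Fm n (pos n (int i + int (d * s))) (pos n (int j + int (d * s)))) / real s"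
    unfolding corr2_Fm[OF n0 s0] assms(1) ..
  also have "\<dots> = (\<Sum>d<s. Mq l (((i-1) div s + d) mod s) * Mq l (((j-1) div s + d) mod s)) / real s"
  proof (intro arg_cong[where f="\<lambda>x. x / real s"] sum.cong refl)
    fix d
    have pi: "pos n (int i + int (d * s)) = (i - 1 + d * s) mod n + 1" using assms(5) by (intro pos_nat) simp
    have pj: "pos n (int j + int (d * s)) = (j - 1 + d * s) mod n + 1" using assms(6) by (intro pos_nat) simp
    have ne: "(i - 1 + d * s) mod n \<noteq> (j - 1 + d * s) mod n"
    proof
      assume "(i - 1 + d * s) mod n = (j - 1 + d * s) mod n"
      then have "(d * s + (i - 1)) mod n = (d * s + (j - 1)) mod n" by (simp add: add.commute)
      then have "(i - 1) mod n = (j - 1) mod n" by (rule mod_cancel_aux)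
      moreover have "i - 1 < n" "j - 1 < n" using assms(5,6) by auto
      ultimately have "i - 1 = j - 1" by simp
      then show False using assms(5-7) by auto
    qed
    show "Fm n (pos n (int i + int (d * s))) (pos n (int j + int (d * s)))
        = Mq l (((i-1) div s + d) mod s) * Mq l (((j-1) div s + d) mod s)"
    proof -
      have bi: "blk n ((i - 1 + d * s) mod n + 1) = ((i-1) div s + d) mod s + 1" by (rule blk_pos[OF assms(1-3)])
      have bj: "blk n ((j - 1 + d * s) mod n + 1) = ((j-1) div s + d) mod s + 1" by (rule blk_pos[OF assms(1-3)])
      have "Fm n (pos n (int i + int (d * s))) (pos n (int j + int (d * s)))
          = mu n ((i - 1 + d * s) mod n + 1) * mu n ((j - 1 + d * s) mod n + 1)"
        unfolding Fm_def pi pj using ne by simp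
      also have "\<dots> = Mq l (blk n ((i - 1 + d * s) mod n + 1) - 1) * Mq l (blk n ((j - 1 + d * s) mod n + 1) - 1)"
        by (simp only: mu_Mq[OF assms(4)])
      also have "\<dots> = Mq l (((i-1) div s + d) mod s) * Mq l (((j-1) div s + d) mod s)"
        unfolding bi bj by simp
      finally show ?thesis .
    qed
  qed
  finally show ?thesis .
qed

lemma block_count: assumes "(s::nat) > 0"
  shows "(\<Sum>i\<in>{1..(s * s)}. f ((i - 1) div s)) = real s * (\<Sum>q<s. (f q :: real))"
proof -
  have "(\<Sum>i\<in>{1..(s * s)}. f ((i - 1) div s)) = (\<Sum>x\<in>{..<(s * s)}. f (x div s))"
    by (rule sum.reindex_bij_witness[of _ "\<lambda>x. x + 1" "\<lambda>i. i - 1"]) auto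
  also have "\<dots> = (\<Sum>q<s. \<Sum>x\<in>{q * s ..< q * s + s}. f (x div s))"
    by (rule sum.nat_group[symmetric])
  also have "\<dots> = (\<Sum>q<s. real s * f q)"
  proof (intro sum.cong refl)
    fix q
    have "(\<Sum>x\<in>{q * s ..< q * s + s}. f (x div s)) = (\<Sum>x\<in>{q * s ..< q * s + s}. f q)"
    proof (intro sum.cong refl)
      fix x assume "x \<in> {q * s ..< q * s + s}"
      then have "x div s = q" using assms
        by (metis atLeastLessThan_iff div_nat_eqI mult.commute mult_Suc_right add.commute)
      then show "f (x div s) = f q" by simp
    qed
    then show "(\<Sum>x\<in>{q * s ..< q * s + s}. f (x div s)) = real s * f q" by simp
  qed
  finally show ?thesis by (simp add: sum_distrib_left)
qed

lemma gamma_gg: assumes "s = 2 * l" "l \<ge> 1" "a < s"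
  shows "(\<Sum>d<s. Mq l ((a + d) mod s) * Mq l ((b + d) mod s)) = gg l ((s - a + b) mod s)"
proof -
  let ?t = "(s - a + b) mod s"
  have s0: "s > 0" using assms by simp
  have "(\<Sum>d<s. Mq l ((a + d) mod s) * Mq l ((b + d) mod s))
      = (\<Sum>d<s. (\<lambda>p. Mq l p * Mq l ((p + ?t) mod s)) ((a + d) mod s))"
  proof (intro sum.cong refl)
    fix d
    have "((a + d) mod s + ?t) mod s = (a + d + (s - a + b)) mod s" by (rule mod_add_eq)
    also have "a + d + (s - a + b) = (b + d) + s" using assms by simp
    finally have "((a + d) mod s + ?t) mod s = (b + d) mod s" by simp
    then show "Mq l ((a + d) mod s) * Mq l ((b + d) mod s) = (\<lambda>p. Mq l p * Mq l ((p + ?t) mod s)) ((a + d) mod s)"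
      by simp
  qed
  also have "\<dots> = (\<Sum>p<s. Mq l p * Mq l ((p + ?t) mod s))" by (rule sum_mod_shift[OF s0])
  finally show ?thesis unfolding gg_def assms(1) .
qed

lemma part_c: assumes "sqn n = s" "s * s = n" "s = 2 * l" "ell n = l" "l \<ge> 1"
  shows "(\<Sum>i\<in>{1..n}. \<Sum>j\<in>{1..n} - {i}. \<bar>corr2 n (int i) (int j)\<bar>) \<le> 32 * real n"
proof -
  have s0: "s > 0" using assms by simp
  define \<gamma> where "\<gamma> a b = (\<Sum>d<s. Mq l ((a + d) mod s) * Mq l ((b + d) mod s))" for a b
  have "(\<Sum>i\<in>{1..n}. \<Sum>j\<in>{1..n} - {i}. \<bar>corr2 n (int i) (int j)\<bar>)
      = (\<Sum>i\<in>{1..n}. \<Sum>j\<in>{1..n} - {i}. \<bar>\<gamma> ((i-1) div s) ((j-1) div s)\<bar> / real s)"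
  proof (intro sum.cong refl)
    fix i j assume "i \<in> {1..n}" "j \<in> {1..n} - {i}"
    then show "\<bar>corr2 n (int i) (int j)\<bar> = \<bar>\<gamma> ((i-1) div s) ((j-1) div s)\<bar> / real s"
      unfolding \<gamma>_def using corr_block[OF assms(1,2) s0 assms(4)] by simp
  qed
  also have "\<dots> \<le> (\<Sum>i\<in>{1..n}. \<Sum>j\<in>{1..n}. \<bar>\<gamma> ((i-1) div s) ((j-1) div s)\<bar> / real s)"
    by (intro sum_mono sum_mono2) auto
  also have "\<dots> = (\<Sum>i\<in>{1..n}. \<Sum>b<s. \<bar>\<gamma> ((i-1) div s) b\<bar>)"
  proof (rule sum.cong[OF refl])
    fix i
    show "(\<Sum>j\<in>{1..n}. \<bar>\<gamma> ((i-1) div s) ((j-1) div s)\<bar> / real s) = (\<Sum>b<s. \<bar>\<gamma> ((i-1) div s) b\<bar>)"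
    proof -
      have "(\<Sum>j\<in>{1..(s * s)}. \<bar>\<gamma> ((i-1) div s) ((j-1) div s)\<bar> / real s) = real s * (\<Sum>b<s. \<bar>\<gamma> ((i-1) div s) b\<bar> / real s)"
        by (rule block_count[OF s0])
      then show ?thesis unfolding assms(2) using s0 by (simp add: sum_divide_distrib[symmetric])
    qed
  qed
  also have "\<dots> = real s * (\<Sum>a<s. \<Sum>b<s. \<bar>\<gamma> a b\<bar>)"
    unfolding assms(2)[symmetric] by (rule block_count[OF s0])
  also have "(\<Sum>a<s. \<Sum>b<s. \<bar>\<gamma> a b\<bar>) = (\<Sum>a<s. \<Sum>t<s. \<bar>gg l t\<bar>)"
  proof (rule sum.cong[OF refl])
    fix a assume a: "a \<in> {..<s}"
    have "(\<Sum>b<s. \<bar>\<gamma> a b\<bar>) = (\<Sum>b<s. \<bar>gg l ((s - a + b) mod s)\<bar>)"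
      unfolding \<gamma>_def using a assms by (simp add: gamma_gg)
    also have "\<dots> = (\<Sum>t<s. \<bar>gg l t\<bar>)" by (rule sum_mod_shift[OF s0])
    finally show "(\<Sum>b<s. \<bar>\<gamma> a b\<bar>) = (\<Sum>t<s. \<bar>gg l t\<bar>)" .
  qed
  also have "\<dots> = real s * (\<Sum>t<s. \<bar>gg l t\<bar>)" by simp
  also have "real s * (real s * (\<Sum>t<s. \<bar>gg l t\<bar>)) \<le> real s * (real s * 32)"
    using sum_gg[OF assms(5)] assms(3) by (intro mult_left_mono) auto
  also have "\<dots> = 32 * real n" unfolding assms(2)[symmetric] by simp
  finally show ?thesis .
qed

theorem lemma2p2:
  shows "(\<forall>n::nat. (\<exists>k::nat. n = 4 ^ k) \<and> n \<ge> 4 \<longrightarrow>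
            (\<forall>i j :: int. corr2 n i j = corr2 n (i + int (sqn n)) (j + int (sqn n)))
          \<and> (\<forall>i i' j j' :: nat. i \<in> {1..n} \<and> i' \<in> {1..n} \<and> j \<in> {1..n} \<and> j' \<in> {1..n}
                \<and> blk n i = blk n i' \<and> blk n j = blk n j' \<and> i \<noteq> j \<and> i' \<noteq> j'
                \<longrightarrow> corr2 n (int i) (int j) = corr2 n (int i') (int j')))
       \<and> (\<exists>C::real. \<forall>n::nat. (\<exists>k::nat. n = 4 ^ k) \<and> n \<ge> 4 \<longrightarrow>
            (\<Sum>i\<in>{1..n}. \<Sum>j\<in>{1..n} - {i}. \<bar>corr2 n (int i) (int j)\<bar>) \<le> C * real n)"
proof (intro conjI allI impI exI[of _ 32])
  fix n :: nat assume h: "(\<exists>k::nat. n = 4 ^ k) \<and> n \<ge> 4"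
  then obtain k where k: "n = 4 ^ k" "n \<ge> 4" by blast
  have st: "sqn n = 2 * ell n" "sqn n * sqn n = n" "ell n \<ge> 1" using params4[OF k] by auto
  have s0: "sqn n > 0" using st by simp
  {
    fix i j :: int
    show "corr2 n i j = corr2 n (i + int (sqn n)) (j + int (sqn n))"
      using part_a[OF refl st(2) s0] .
  }
  {
    fix i i' j j' :: nat
    assume H: "i \<in> {1..n} \<and> i' \<in> {1..n} \<and> j \<in> {1..n} \<and> j' \<in> {1..n}
                \<and> blk n i = blk n i' \<and> blk n j = blk n j' \<and> i \<noteq> j \<and> i' \<noteq> j'"
    have bi: "(i - 1) div sqn n = (i' - 1) div sqn n" and bj: "(j - 1) div sqn n = (j' - 1) div sqn n"
      using H unfolding blk_def by auto
    have c1: "corr2 n (int i) (int j) = (\<Sum>d<sqn n. Mq (ell n) (((i-1) div sqn n + d) mod sqn n) * Mq (ell n) (((j-1) div sqn n + d) mod sqn n)) / real (sqn n)"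
      by (rule corr_block[OF refl st(2) s0 refl]) (use H in auto)
    have c2: "corr2 n (int i') (int j') = (\<Sum>d<sqn n. Mq (ell n) (((i'-1) div sqn n + d) mod sqn n) * Mq (ell n) (((j'-1) div sqn n + d) mod sqn n)) / real (sqn n)"
      by (rule corr_block[OF refl st(2) s0 refl]) (use H in auto)
    show "corr2 n (int i) (int j) = corr2 n (int i') (int j')"
      unfolding c1 c2 bi bj ..
  }
  show "(\<Sum>i\<in>{1..n}. \<Sum>j\<in>{1..n} - {i}. \<bar>corr2 n (int i) (int j)\<bar>) \<le> 32 * real n"
    using part_c[OF refl st(2) st(1) refl st(3)] .
qed


end
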